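(* Let $N,Q,S\ge 1$ be integers, let $\mathbf{H}\in\mathbb{R}^{Q\times N}$ with $\mathbf{H}\neq\mathbf{0}$, $\mathbf{y}\in\mathbb{R}^Q$, let $\mathbf{V}_0$ be a real matrix with $N$ columns, and for each $s\in\{1,\dots,S\}$ let $P_s\ge1$, $\mathbf{V}_s\in\mathbb{R}^{P_s\times N}$ and $\mathbf{c}_s\in\mathbb{R}^{P_s}$. Let $\Phi:\mathbb{R}^Q\to\mathbb{R}$ and, for every $\delta>0$ and $s\in\{1,\dots,S\}$, $\psi_{s,\delta}:\mathbb{R}\to\mathbb{R}$. For $\delta>0$ define $$F_\delta(\mathbf{x})=\Phi(\mathbf{H}\mathbf{x}-\mathbf{y})+\sum_{s=1}^S\psi_{s,\delta}(\|\mathbf{V}_s\mathbf{x}-\mathbf{c}_s\|)+\|\mathbf{V}_0\mathbf{x}\|^2,\qquad \mathbf{x}\in\mathbb{R}^N.$$ Assume: (a) $\Phi$ is continuous and coercive; (b) for every $\delta>0$ and $s$, $\psi_{s,\delta}$ is continuous and nonnegative; (c) $\operatorname{Ker}\mathbf{H}\cap\operatorname{Ker}\mathbf{V}_0=\{\mathbf{0}\}$; (d) for every $s$ and all $0<\delta_1\le\delta_2$, $\psi_{s,\delta_1}(t)\ge\psi_{s,\delta_2}(t)$ for all $t\in\mathbb{R}$; (e) there exists $\lambda>0$ such that for every $s$ and every $t\in\mathbb{R}$, $\lim_{\delta\to0,\,\delta>0}\psi_{s,\delta}(t)=\lambda\chi_{\mathbb{R}\setminus\{0\}}(t)$, where $\chi_{\mathbb{R}\setminus\{0\}}(t)=0$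 if $t=0$ and $1$ otherwise. Define $$F_0(\mathbf{x})=\Phi(\mathbf{H}\mathbf{x}-\mathbf{y})+\lambda\,\ell_0(\mathbf{V}\mathbf{x}-\mathbf{c})+\|\mathbf{V}_0\mathbf{x}\|^2,$$ where $\mathbf{V}=[\mathbf{V}_1^\top|\cdots|\mathbf{V}_S^\top]^\top$, $\mathbf{c}=[\mathbf{c}_1^\top,\dots,\mathbf{c}_S^\top]^\top$, and for $\mathbf{t}=[\mathbf{t}_1^\top,\dots,\mathbf{t}_S^\top]^\top$ with $\mathbf{t}_s\in\mathbb{R}^{P_s}$, $\ell_0(\mathbf{t})=\sum_{s=1}^S\chi_{\mathbb{R}\setminus\{0\}}(\|\mathbf{t}_s\|)$. Let $(\delta_n)_{n\in\mathbb{N}}$ be a decreasing sequence of positive reals converging to $0$. Then: (i) $\inf F_{\delta_n}\to\inf F_0$ as $n\to+\infty$; (ii) if for every $n$, $\hat{\mathbf{x}}_n$ is a minimizer of $F_{\delta_n}$, then $(\hat{\mathbf{x}}_n)_{n\in\mathbb{N}}$ is bounded and all its cluster points are minimizers of $F_0$; (iii) if $F_0$ has a unique minimizer $\tilde{\mathbf{x}}$, then $\hat{\mathbf{x}}_n\to\tilde{\mathbf{x}}$ as $n\to+\infty$.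
   Context: $\|\cdot\|$ denotes the Euclidean norm. *)

theory Defs
  imports "HOL-Analysis.Analysis"
begin

definition chi_nz :: "real \<Rightarrow> real" where
  "chi_nz t = (if t = 0 then 0 else 1)"

text \<open>Block vectors: t s i is the i-th entry (i < P s) of block t_s; Euclidean norm of block s.\<close>
definition block_norm :: "(nat \<Rightarrow> nat) \<Rightarrow> (nat \<Rightarrow> nat \<Rightarrow> real) \<Rightarrow> nat \<Rightarrow> real" where
  "block_norm P t s = sqrt (\<Sum>i<P s. (t s i)\<^sup>2)"

definition ell0 :: "nat \<Rightarrow> (nat \<Rightarrow> nat) \<Rightarrow> (nat \<Rightarrow> nat \<Rightarrow> real) \<Rightarrow> real" where
  "ell0 S P t = (\<Sum>s=1..S. chi_nz (block_norm P t s))"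

text \<open>Block matrix-vector residual V x - c, where V s is a (P s) x N matrix given by entries
  V s i j (i < P s, j the column index) and c s i the entries of c_s.\<close>
definition block_res :: "(nat \<Rightarrow> nat \<Rightarrow> 'n::finite \<Rightarrow> real) \<Rightarrow> (nat \<Rightarrow> nat \<Rightarrow> real)
    \<Rightarrow> real^'n \<Rightarrow> nat \<Rightarrow> nat \<Rightarrow> real" where
  "block_res V c x = (\<lambda>s i. (\<Sum>j\<in>UNIV. V s i j * x $ j) - c s i)"

definition coercive :: "('a::real_normed_vector \<Rightarrow> real) \<Rightarrow> bool" where
  "coercive f \<longleftrightarrow> filterlim f at_top at_infinity"

definition is_minimizer :: "('a \<Rightarrow> real) \<Rightarrow> 'a \<Rightarrow> bool" where
  "is_minimizer f x \<longleftrightarrow> (\<forall>z. f x \<le> f z)"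

definition F_delta :: "(real^'q \<Rightarrow> real) \<Rightarrow> real^'n^'q \<Rightarrow> real^'q \<Rightarrow> real^'n^'m
    \<Rightarrow> nat \<Rightarrow> (nat \<Rightarrow> nat) \<Rightarrow> (nat \<Rightarrow> nat \<Rightarrow> 'n::finite \<Rightarrow> real) \<Rightarrow> (nat \<Rightarrow> nat \<Rightarrow> real)
    \<Rightarrow> (nat \<Rightarrow> real \<Rightarrow> real \<Rightarrow> real) \<Rightarrow> real \<Rightarrow> real^'n \<Rightarrow> real" where
  "F_delta Phi H y V0 S P V c psi \<delta> x =
     Phi (H *v x - y) + (\<Sum>s=1..S. psi s \<delta> (block_norm P (block_res V c x) s)) + (norm (V0 *v x))\<^sup>2"

definition F_zero :: "(real^'q \<Rightarrow> real) \<Rightarrow> real^'n^'q \<Rightarrow> real^'q \<Rightarrow> real^'n^'m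
    \<Rightarrow> nat \<Rightarrow> (nat \<Rightarrow> nat) \<Rightarrow> (nat \<Rightarrow> nat \<Rightarrow> 'n::finite \<Rightarrow> real) \<Rightarrow> (nat \<Rightarrow> nat \<Rightarrow> real)
    \<Rightarrow> real \<Rightarrow> real^'n \<Rightarrow> real" where
  "F_zero Phi H y V0 S P V c lam x =
     Phi (H *v x - y) + lam * ell0 S P (block_res V c x) + (norm (V0 *v x))\<^sup>2"

end

theory Submission imports Defs begin

lemma unique_cluster_conv:
  fixes x :: "nat \<Rightarrow> 'a::heine_borel"
  assumes b: "bounded (range x)"
    and cl: "\<And>z r. strict_mono r \<Longrightarrow> (x \<circ> r) \<longlonglongrightarrow> z \<Longrightarrow> z = a"
  shows "x \<longlonglongrightarrow> a"
proof (rule ccontr)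
  assume "\<not> x \<longlonglongrightarrow> a"
  then obtain e where e: "e > 0" "\<not> eventually (\<lambda>n. dist (x n) a < e) sequentially"
    unfolding tendsto_iff by blast
  hence "infinite {n. \<not> dist (x n) a < e}"
    using e(2) by (simp add: cofinite_eq_sequentially[symmetric] eventually_cofinite)
  then obtain r :: "nat \<Rightarrow> nat" where r: "strict_mono r" "\<And>n. r n \<in> {n. \<not> dist (x n) a < e}"
    using infinite_enumerate by blast
  have "bounded (range (x \<circ> r))" using b by (rule bounded_subset) auto
  then obtain l r2 where r2: "strict_mono r2" "((x \<circ> r) \<circ> r2) \<longlonglongrightarrow> l"
    using bounded_imp_convergent_subsequence by blast
  have "l = a" using cl[of "r \<circ> r2" l] r2 r(1) by (simp add: strict_mono_o o_assoc)
  with r2 have "eventually (\<lambda>n. dist (((x \<circ> r) \<circ> r2) n) a < e) sequentially"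
    using e(1) tendsto_iff by blast
  then obtain n where "dist (x (r (r2 n))) a < e" using eventually_sequentially by auto
  with r(2)[of "r2 n"] show False by simp
qed

lemma abstract_main:
  fixes Fd :: "real \<Rightarrow> 'a::heine_borel \<Rightarrow> real" and F0 G :: "'a \<Rightarrow> real"
    and \<delta> :: "nat \<Rightarrow> real"
  assumes cont: "\<And>d. d > 0 \<Longrightarrow> continuous_on UNIV (Fd d)"
    and mono: "\<And>d1 d2 x. 0 < d1 \<Longrightarrow> d1 \<le> d2 \<Longrightarrow> Fd d2 x \<le> Fd d1 x"
    and le0: "\<And>d x. d > 0 \<Longrightarrow> Fd d x \<le> F0 x"
    and lim: "\<And>x. ((\<lambda>d. Fd d x) \<longlongrightarrow> F0 x) (at_right 0)"
    and Gle: "\<And>d x. d > 0 \<Longrightarrow> G x \<le> Fd d x"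
    and Gbdd: "\<And>M. bounded {x. G x \<le> M}"
    and Gbelow: "\<And>x. m \<le> G x"
    and delta_pos: "\<forall>n. \<delta> n > 0"
    and delta_dec: "decseq \<delta>"
    and delta_lim: "\<delta> \<longlonglongrightarrow> 0"
  shows "((\<lambda>n. INF x. Fd (\<delta> n) x) \<longlonglongrightarrow> (INF x. F0 x))
     \<and> (\<forall>xh :: nat \<Rightarrow> 'a.
          (\<forall>n. is_minimizer (Fd (\<delta> n)) (xh n)) \<longrightarrow>
            bounded (range xh)
            \<and> (\<forall>z. (\<exists>r. strict_mono r \<and> (xh \<circ> r) \<longlonglongrightarrow> z)
                    \<longrightarrow> is_minimizer F0 z)
            \<and> (\<forall>xt. is_minimizer F0 xt
                    \<and> (\<forall>z. is_minimizer F0 z \<longrightarrow> z = xt)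
                    \<longrightarrow> xh \<longlonglongrightarrow> xt))"
proof -
  define I where "I n = (INF x. Fd (\<delta> n) x)" for n
  define I0 where "I0 = (INF x. F0 x)"
  have mle: "m \<le> Fd (\<delta> n) x" for n x
    using Gbelow[of x] Gle[of "\<delta> n" x] delta_pos by force
  have mle0: "m \<le> F0 x" for x
    using mle[of 0 x] le0[of "\<delta> 0" x] delta_pos by force
  have bddn: "bdd_below (range (Fd (\<delta> n)))" for n
    using mle by (auto intro!: bdd_belowI[of _ m])
  have bdd0: "bdd_below (range F0)"
    using mle0 by (auto intro!: bdd_belowI[of _ m])
  have In_le: "I n \<le> Fd (\<delta> n) x" for n x
    unfolding I_def by (rule cINF_lower[OF bddn]) simp
  have I0_le: "I0 \<le> F0 x" for x
    unfolding I0_def by (rule cINF_lower[OF bdd0]) simp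
  have I_le_I0: "I n \<le> I0" for n
    unfolding I0_def by (rule cINF_greatest) (auto intro: order_trans[OF In_le le0] simp: delta_pos)
  have Fmono: "Fd (\<delta> n) x \<le> Fd (\<delta> k) x" if "n \<le> k" for n k x
    using mono[of "\<delta> k" "\<delta> n" x] delta_pos delta_dec that by (simp add: decseq_def)
  have Iinc: "incseq I"
    unfolding incseq_def I_def
    by (intro allI impI cINF_greatest) (auto intro: order_trans[OF In_le[unfolded I_def] Fmono])
  define L where "L = (SUP n. I n)"
  have IL: "I \<longlonglongrightarrow> L" unfolding L_def
    by (rule LIMSEQ_incseq_SUP[OF _ Iinc]) (use I_le_I0 in \<open>auto intro!: bdd_aboveI[of _ I0]\<close>)
  have I_le_L: "I n \<le> L" for n using incseq_le[OF Iinc IL] .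
  have L_le: "L \<le> I0" using IL I_le_I0 by (intro LIMSEQ_le_const2) auto
  have dlim: "filterlim \<delta> (at_right 0) sequentially"
    using delta_lim delta_pos by (auto simp: filterlim_at intro!: always_eventually dest: less_imp_neq[symmetric])
  have Flim: "(\<lambda>k. Fd (\<delta> k) x) \<longlonglongrightarrow> F0 x" for x
    using filterlim_compose[OF lim dlim] .
  have key: "bounded (range xs) \<and> (\<forall>z r. strict_mono r \<and> (xs \<circ> r) \<longlonglongrightarrow> z \<longrightarrow> F0 z \<le> L)"
    if xs: "\<And>n. Fd (\<delta> n) (xs n) \<le> I n + e n" and e: "e \<longlonglongrightarrow> 0" for xs e
  proof
    have "Bseq e" using e convergent_imp_Bseq convergentI by blast
    then obtain E where E0: "\<And>n. norm (e n) \<le> E" by (metis BseqE)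
    have E: "e n \<le> E" for n using E0[of n] by simp
    have "range xs \<subseteq> {x. G x \<le> I0 + E}"
    proof clarify
      fix n show "G (xs n) \<le> I0 + E"
        using Gle[of "\<delta> n" "xs n"] delta_pos xs[of n] I_le_I0[of n] E[of n] by auto
    qed
    thus "bounded (range xs)" using Gbdd bounded_subset by blast
    show "\<forall>z r. strict_mono r \<and> (xs \<circ> r) \<longlonglongrightarrow> z \<longrightarrow> F0 z \<le> L"
    proof (intro allI impI, elim conjE)
      fix z r assume r: "strict_mono r" and conv: "(xs \<circ> r) \<longlonglongrightarrow> z"
      have "Fd (\<delta> k) z \<le> L" for k
      proof -
        have c1: "(\<lambda>n. Fd (\<delta> k) ((xs \<circ> r) n)) \<longlonglongrightarrow> Fd (\<delta> k) z"
          using cont[of "\<delta> k"] delta_pos conv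
          by (metis continuous_on_tendsto_compose UNIV_I eventually_sequentially)
        have c2: "(\<lambda>n. L + e (r n)) \<longlonglongrightarrow> L + 0"
          by (intro tendsto_add tendsto_const) (use LIMSEQ_subseq_LIMSEQ[OF e r] in \<open>simp add: o_def\<close>)
        have ev: "eventually (\<lambda>n. Fd (\<delta> k) ((xs \<circ> r) n) \<le> L + e (r n)) sequentially"
        proof (rule eventually_sequentiallyI[of k])
          fix n assume "k \<le> n"
          hence "k \<le> r n" using seq_suble[OF r, of n] by linarith
          hence "Fd (\<delta> k) (xs (r n)) \<le> Fd (\<delta> (r n)) (xs (r n))" by (rule Fmono)
          also have "\<dots> \<le> I (r n) + e (r n)" by (rule xs)
          also have "\<dots> \<le> L + e (r n)" using I_le_L by simp
          finally show "Fd (\<delta> k) ((xs \<circ> r) n) \<le> L + e (r n)" by simp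
        qed
        show ?thesis using tendsto_le[OF _ c2 c1 ev] by simp
      qed
      thus "F0 z \<le> L" using Flim[of z] by (intro LIMSEQ_le_const2) auto
    qed
  qed
  have "\<exists>x. Fd (\<delta> n) x < I n + 1 / (real n + 1)" for n
    unfolding I_def using bddn[of n]
    by (metis cINF_less_iff less_add_same_cancel1 of_nat_0_le_iff UNIV_not_empty
        add_nonneg_pos divide_pos_pos zero_less_one)
  then obtain xs where xs: "\<And>n. Fd (\<delta> n) (xs n) < I n + 1 / (real n + 1)" by metis
  have e1: "(\<lambda>n. 1 / (real n + 1)) \<longlonglongrightarrow> 0"
    using LIMSEQ_inverse_real_of_nat by (simp add: inverse_eq_divide add.commute)
  from key[of xs, OF less_imp_le[OF xs] e1]
  have kx: "bounded (range xs)" "\<And>z r. strict_mono r \<Longrightarrow> (xs \<circ> r) \<longlonglongrightarrow> z \<Longrightarrow> F0 z \<le> L" by blast+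
  obtain z r where "strict_mono r" "(xs \<circ> r) \<longlonglongrightarrow> z"
    using bounded_imp_convergent_subsequence[OF kx(1)] by blast
  hence "F0 z \<le> L" by (rule kx(2))
  hence LI0: "L = I0" using L_le I0_le[of z] by linarith
  have part1: "I \<longlonglongrightarrow> I0" using IL LI0 by simp
  have part2: "bounded (range xh)
            \<and> (\<forall>z. (\<exists>r. strict_mono r \<and> (xh \<circ> r) \<longlonglongrightarrow> z)
                    \<longrightarrow> is_minimizer F0 z)
            \<and> (\<forall>xt. is_minimizer F0 xt
                    \<and> (\<forall>z. is_minimizer F0 z \<longrightarrow> z = xt)
                    \<longrightarrow> xh \<longlonglongrightarrow> xt)"
    if hm: "\<forall>n. is_minimizer (Fd (\<delta> n)) (xh n)" for xh
  proof -
    have "Fd (\<delta> n) (xh n) \<le> I n + 0" for n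
      unfolding I_def using hm by (auto simp: is_minimizer_def intro: cINF_greatest)
    from key[of xh, OF this tendsto_const]
    have kh: "bounded (range xh)" "\<And>z r. strict_mono r \<Longrightarrow> (xh \<circ> r) \<longlonglongrightarrow> z \<Longrightarrow> F0 z \<le> L" by blast+
    have cm: "is_minimizer F0 z" if "strict_mono r" "(xh \<circ> r) \<longlonglongrightarrow> z" for z r
      unfolding is_minimizer_def
    proof
      fix w show "F0 z \<le> F0 w" using kh(2)[OF that] LI0 I0_le[of w] by linarith
    qed
    show ?thesis
    proof (intro conjI allI impI kh(1))
      fix z assume "\<exists>r. strict_mono r \<and> (xh \<circ> r) \<longlonglongrightarrow> z"
      thus "is_minimizer F0 z" using cm by blast
    next
      fix xt assume u: "is_minimizer F0 xt \<and> (\<forall>z. is_minimizer F0 z \<longrightarrow> z = xt)"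
      show "xh \<longlonglongrightarrow> xt" using kh(1) by (rule unique_cluster_conv) (use u cm in blast)
    qed
  qed
  show ?thesis using part1 part2 unfolding I_def I0_def by blast
qed

lemma coercive_facts:
  fixes Phi :: "'a::{heine_borel,real_normed_vector} \<Rightarrow> real"
  assumes cont: "continuous_on UNIV Phi" and co: "coercive Phi"
  shows "\<exists>m. \<forall>u. m \<le> Phi u" and "\<And>M. \<exists>R. \<forall>u. Phi u \<le> M \<longrightarrow> norm u \<le> R"
proof -
  have ev: "\<exists>b. \<forall>u. b \<le> norm u \<longrightarrow> Z \<le> Phi u" for Z
    using co unfolding coercive_def filterlim_at_top eventually_at_infinity by blast
  show "\<And>M. \<exists>R. \<forall>u. Phi u \<le> M \<longrightarrow> norm u \<le> R"
  proof -
    fix M obtain b where b: "\<forall>u. b \<le> norm u \<longrightarrow> M + 1 \<le> Phi u" using ev by blast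
    show "\<exists>R. \<forall>u. Phi u \<le> M \<longrightarrow> norm u \<le> R"
    proof (intro exI allI impI)
      fix u assume u: "Phi u \<le> M"
      show "norm u \<le> b"
      proof (rule ccontr)
        assume "\<not> norm u \<le> b" hence "b \<le> norm u" by simp
        with b have "M + 1 \<le> Phi u" by blast
        with u show False by simp
      qed
    qed
  qed
  obtain b where b: "\<forall>u. b \<le> norm u \<longrightarrow> 0 \<le> Phi u" using ev by blast
  have "compact (Phi ` cball 0 b)"
    by (rule compact_continuous_image) (use cont in \<open>auto intro: continuous_on_subset\<close>)
  then obtain a where a: "\<forall>v\<in>Phi ` cball 0 b. norm v \<le> a"
    using compact_imp_bounded bounded_iff by blast
  show "\<exists>m. \<forall>u. m \<le> Phi u"
  proof (intro exI allI)
    fix u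
    show "min 0 (- a) \<le> Phi u"
    proof (cases "b \<le> norm u")
      case True thus ?thesis using b by force
    next
      case False hence "u \<in> cball 0 b" by simp
      hence "norm (Phi u) \<le> a" using a by blast
      thus ?thesis by simp
    qed
  qed
qed

lemma G_bounded:
  fixes Phi :: "real^'q \<Rightarrow> real" and H :: "real^'n^'q" and y :: "real^'q"
    and V0 :: "real^'n^'m"
  assumes cont: "continuous_on UNIV Phi" and co: "coercive Phi"
    and ker: "{x. H *v x = 0} \<inter> {x. V0 *v x = 0} = {0}"
  shows "\<exists>m. \<forall>x. m \<le> Phi (H *v x - y) + (norm (V0 *v x))\<^sup>2"
    and "bounded {x. Phi (H *v x - y) + (norm (V0 *v x))\<^sup>2 \<le> M}"
proof -
  obtain m where m: "\<forall>u. m \<le> Phi u" using coercive_facts(1)[OF cont co] by blast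
  show "\<exists>m. \<forall>x. m \<le> Phi (H *v x - y) + (norm (V0 *v x))\<^sup>2"
    using m by (metis add_increasing2 zero_le_power2)
  obtain R where R: "\<forall>u. Phi u \<le> M \<longrightarrow> norm u \<le> R" using coercive_facts(2)[OF cont co] by blast
  define f where "f x = (H *v x, V0 *v x)" for x :: "real^'n"
  have lin: "linear f" unfolding f_def
    by (intro bounded_linear.linear bounded_linear_Pair matrix_vector_mul_bounded_linear)
  have "inj f"
  proof (rule linear_injective_0[OF lin, THEN iffD2], intro allI impI)
    fix x assume "f x = 0"
    hence "x \<in> {x. H *v x = 0} \<inter> {x. V0 *v x = 0}" by (simp add: f_def zero_prod_def)
    thus "x = 0" using ker by blast
  qed
  then obtain B where B: "B > 0" "\<And>x. B * norm x \<le> norm (f x)"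
    using linear_inj_bounded_below_pos[OF lin] by blast
  have "{x. Phi (H *v x - y) + (norm (V0 *v x))\<^sup>2 \<le> M} \<subseteq> cball 0 ((R + norm y + sqrt (M - m)) / B)"
  proof clarify
    fix x assume x: "Phi (H *v x - y) + (norm (V0 *v x))\<^sup>2 \<le> M"
    have "Phi (H *v x - y) \<le> M" using x by (metis add_increasing2 zero_le_power2 order_trans add.commute le_add_same_cancel2)
    hence "norm (H *v x - y) \<le> R" using R by blast
    hence h: "norm (H *v x) \<le> R + norm y" using norm_triangle_ineq2[of "H *v x" y] by linarith
    have "(norm (V0 *v x))\<^sup>2 \<le> M - m" using x m[rule_format, of "H *v x - y"] by linarith
    hence v: "norm (V0 *v x) \<le> sqrt (M - m)" by (simp add: real_le_rsqrt)
    have "norm (f x) \<le> norm (H *v x) + norm (V0 *v x)" unfolding f_def by (rule norm_Pair_le)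
    hence "B * norm x \<le> R + norm y + sqrt (M - m)" using B(2)[of x] h v by linarith
    thus "x \<in> cball 0 ((R + norm y + sqrt (M - m)) / B)"
      using B(1) by (simp add: field_simps)
  qed
  thus "bounded {x. Phi (H *v x - y) + (norm (V0 *v x))\<^sup>2 \<le> M}"
    using bounded_cball bounded_subset by blast
qed

theorem proposition2:
  fixes Phi :: "real^'q \<Rightarrow> real" and H :: "real^'n^'q" and y :: "real^'q"
    and V0 :: "real^'n^'m" and S :: nat and P :: "nat \<Rightarrow> nat"
    and V :: "nat \<Rightarrow> nat \<Rightarrow> 'n \<Rightarrow> real" and c :: "nat \<Rightarrow> nat \<Rightarrow> real"
    and psi :: "nat \<Rightarrow> real \<Rightarrow> real \<Rightarrow> real" and lam :: real
    and \<delta> :: "nat \<Rightarrow> real"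
  assumes S_pos: "S \<ge> 1"
    and P_pos: "\<forall>s\<in>{1..S}. P s \<ge> 1"
    and H_nz: "H \<noteq> 0"
    and Phi_cont: "continuous_on UNIV Phi"
    and Phi_coercive: "coercive Phi"
    and psi_cont: "\<forall>d>0. \<forall>s\<in>{1..S}. continuous_on UNIV (psi s d)"
    and psi_nonneg: "\<forall>d>0. \<forall>s\<in>{1..S}. \<forall>t. psi s d t \<ge> 0"
    and ker: "{x. H *v x = 0} \<inter> {x. V0 *v x = 0} = {0}"
    and psi_mono: "\<forall>s\<in>{1..S}. \<forall>d1 d2. 0 < d1 \<and> d1 \<le> d2 \<longrightarrow> (\<forall>t. psi s d1 t \<ge> psi s d2 t)"
    and lam_pos: "lam > 0"
    and psi_lim: "\<forall>s\<in>{1..S}. \<forall>t. ((\<lambda>d. psi s d t) \<longlongrightarrow> lam * chi_nz t) (at_right 0)"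
    and delta_pos: "\<forall>n. \<delta> n > 0"
    and delta_dec: "decseq \<delta>"
    and delta_lim: "\<delta> \<longlonglongrightarrow> 0"
  shows
    "((\<lambda>n. INF x. F_delta Phi H y V0 S P V c psi (\<delta> n) x)
        \<longlonglongrightarrow> (INF x. F_zero Phi H y V0 S P V c lam x))
     \<and> (\<forall>xh :: nat \<Rightarrow> real^'n.
          (\<forall>n. is_minimizer (F_delta Phi H y V0 S P V c psi (\<delta> n)) (xh n)) \<longrightarrow>
            bounded (range xh)
            \<and> (\<forall>z. (\<exists>r. strict_mono r \<and> (xh \<circ> r) \<longlonglongrightarrow> z)
                    \<longrightarrow> is_minimizer (F_zero Phi H y V0 S P V c lam) z)
            \<and> (\<forall>xt. is_minimizer (F_zero Phi H y V0 S P V c lam) xt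
                    \<and> (\<forall>z. is_minimizer (F_zero Phi H y V0 S P V c lam) z \<longrightarrow> z = xt)
                    \<longrightarrow> xh \<longlonglongrightarrow> xt))"
proof -
  let ?Fd = "\<lambda>d. F_delta Phi H y V0 S P V c psi d"
  let ?F0 = "F_zero Phi H y V0 S P V c lam"
  let ?G = "\<lambda>x. Phi (H *v x - y) + (norm (V0 *v x))\<^sup>2"
  let ?b = "\<lambda>x s. block_norm P (block_res V c x) s"
  have psi_le: "psi s d t \<le> lam * chi_nz t" if s: "s \<in> {1..S}" and d: "d > 0" for s d t
  proof (rule tendsto_lowerbound[OF psi_lim[rule_format, OF s]])
    show "\<forall>\<^sub>F d' in at_right 0. psi s d t \<le> psi s d' t"
      unfolding eventually_at_right_field
      by (rule exI[of _ d]) (use d psi_mono s in auto)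
  qed simp
  have F0eq: "?F0 x = Phi (H *v x - y) + (\<Sum>s=1..S. lam * chi_nz (?b x s)) + (norm (V0 *v x))\<^sup>2" for x
    unfolding F_zero_def ell0_def by (simp add: sum_distrib_left)
  have cont_b: "continuous_on UNIV (\<lambda>x. ?b x s)" for s
    unfolding block_norm_def block_res_def by (intro continuous_intros)
  obtain m where m: "\<forall>x. m \<le> ?G x" using G_bounded(1)[OF Phi_cont Phi_coercive ker] by blast
  show ?thesis
  proof (rule abstract_main[where G = ?G and m = m])
    fix d :: real assume d: "d > 0"
    show "continuous_on UNIV (?Fd d)"
      unfolding F_delta_def
      by (intro continuous_intros continuous_on_compose2[OF Phi_cont]
           continuous_on_compose2[OF psi_cont[rule_format, OF d] cont_b])
         (auto intro: continuous_intros)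
  next
    fix d1 d2 :: real and x assume "0 < d1" "d1 \<le> d2"
    thus "?Fd d2 x \<le> ?Fd d1 x"
      unfolding F_delta_def using psi_mono by (auto intro!: sum_mono)
  next
    fix d :: real and x assume "d > 0"
    thus "?Fd d x \<le> ?F0 x"
      unfolding F_delta_def F0eq using psi_le by (auto intro!: sum_mono)
  next
    fix x
    show "((\<lambda>d. ?Fd d x) \<longlongrightarrow> ?F0 x) (at_right 0)"
      unfolding F_delta_def F0eq
      by (intro tendsto_add tendsto_const tendsto_sum) (use psi_lim in auto)
  next
    fix d :: real and x assume "d > 0"
    thus "?G x \<le> ?Fd d x"
      unfolding F_delta_def using psi_nonneg by (auto intro!: sum_nonneg)
  next
    fix M show "bounded {x. ?G x \<le> M}" by (rule G_bounded(2)[OF Phi_cont Phi_coercive ker])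
  next
    fix x show "m \<le> ?G x" using m by blast
  qed (use delta_pos delta_dec delta_lim in auto)
qed

end
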